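(* Let $R>0$, $L>0$ and let $N$ be a positive integer. Let $\theta_0=1$, $\theta_i=\frac{1+\sqrt{1+4\theta_{i-1}^2}}{2}$ for $i=1,\dots,N-1$, $\theta_N=\frac{1+\sqrt{1+8\theta_{N-1}^2}}{2}$, and define $\zeta^*=(\zeta^*_0,\dots,\zeta^*_{N+2})$ by $\zeta^*_{N+2}=0$, $\zeta^*_{N+1}=\frac{\theta_N-1}{\theta_N^2(2\theta_N-1)}R^2$, $\zeta^*_N=\frac{\theta_N}{\theta_N-1}\zeta^*_{N+1}$, and $\zeta^*_i=\frac{2\theta_i}{2\theta_i-1}\zeta^*_{i+1}$ for $i=0,\dots,N-1$. Let $e_0,\dots,e_N$ be the standard unit vectors of $\mathbb{R}^{N+1}$ and set \[ x_{N+1}=-\sum_{j=0}^{N}\frac{\zeta^*_j-\zeta^*_{N+2}}{\sqrt{\zeta^*_j-\zeta^*_{j+1}}}e_j,\qquad f_N=\frac L2(\zeta^*_N+\zeta^*_{N+1}). \] Then $\|x_{N+1}\|=R$ and $f_N=\frac{LR^2}{2\theta_N^2}$. *)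

theory Defs
  imports Complex_Main
begin

fun theta_std :: "nat \<Rightarrow> real" where
  "theta_std 0 = 1"
| "theta_std (Suc i) = (1 + sqrt (1 + 4 * (theta_std i)\<^sup>2)) / 2"

definition theta :: "nat \<Rightarrow> nat \<Rightarrow> real" where
  "theta N i = (if i < N then theta_std i
               else (1 + sqrt (1 + 8 * (theta_std (N - 1))\<^sup>2)) / 2)"

text \<open>zeta_aux N R m is zeta*_(N+2-m), computed by backward recursion.\<close>
fun zeta_aux :: "nat \<Rightarrow> real \<Rightarrow> nat \<Rightarrow> real" where
  "zeta_aux N R 0 = 0"
| "zeta_aux N R (Suc 0) = (theta N N - 1) / ((theta N N)\<^sup>2 * (2 * theta N N - 1)) * R\<^sup>2"
| "zeta_aux N R (Suc (Suc 0)) = theta N N / (theta N N - 1) * zeta_aux N R (Suc 0)"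
| "zeta_aux N R (Suc (Suc (Suc k))) =
     (2 * theta N (N - Suc k)) / (2 * theta N (N - Suc k) - 1) * zeta_aux N R (Suc (Suc k))"

definition zeta :: "nat \<Rightarrow> real \<Rightarrow> nat \<Rightarrow> real" where
  "zeta N R i = zeta_aux N R (N + 2 - i)"

definition xN1 :: "nat \<Rightarrow> real \<Rightarrow> nat \<Rightarrow> real" where
  "xN1 N R j = - (zeta N R j - zeta N R (N + 2)) / sqrt (zeta N R j - zeta N R (Suc j))"

end

theory Submission
  imports Defs
begin

lemma h1: "(a::real) > 0 \<Longrightarrow> d > 0 \<Longrightarrow> (c/d*a)\<^sup>2/(a/d) = c*(c/d*a)"
  by (simp add: power2_eq_square divide_simps)
lemma h2: "(d::real) \<noteq> 0 \<Longrightarrow> x*d*(c/d*b) = x*c*b" by simp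
lemma h3: "(T::real) \<ge> 2 \<Longrightarrow> T/(T-1) * ((T - 1) / (T\<^sup>2 * (2 * T - 1)) * R\<^sup>2) = R\<^sup>2 / (T * (2*T-1))"
  by (simp add: power2_eq_square divide_simps)

lemma h4: "(T::real) \<ge> 2 \<Longrightarrow> R\<^sup>2 / (T * (2*T-1)) + (T - 1) / (T\<^sup>2 * (2 * T - 1)) * R\<^sup>2 = R\<^sup>2 / T\<^sup>2"
  by (simp add: power2_eq_square divide_simps) (simp add: algebra_simps)

lemma ts_ge1: "theta_std i \<ge> 1"
proof (induction i)
  case 0 then show ?case by simp
next
  case (Suc i)
  have "sqrt (1 + 4 * (theta_std i)\<^sup>2) \<ge> 1" by simp
  then show ?case by simp
qed

lemma sq_rec: "(1 + sqrt (1 + c * a\<^sup>2)) / 2 = T \<Longrightarrow> c \<ge> 0 \<Longrightarrow> T\<^sup>2 - T = c/4 * a\<^sup>2"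
proof -
  assume h: "(1 + sqrt (1 + c * a\<^sup>2)) / 2 = T" and c: "c \<ge> 0"
  have nn: "1 + c * a\<^sup>2 \<ge> 0" using c by simp
  have "sqrt (1 + c * a\<^sup>2) = 2*T - 1" using h by simp
  then have "(2*T-1)\<^sup>2 = 1 + c * a\<^sup>2" using nn by (metis real_sqrt_pow2)
  then show ?thesis by (simp add: power2_eq_square algebra_simps)
qed

lemma ts_rec: "(theta_std (Suc i))\<^sup>2 - theta_std (Suc i) = (theta_std i)\<^sup>2"
  using sq_rec[of 4 "theta_std i" "theta_std (Suc i)"] by simp

lemma T_ge2: assumes "N \<ge> 1" shows "theta N N \<ge> 2"
proof -
  have a: "theta_std (N-1) \<ge> 1" by (rule ts_ge1)
  then have "(theta_std (N-1))\<^sup>2 \<ge> 1" by simp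
  then have "1 + 8 * (theta_std (N-1))\<^sup>2 \<ge> 3\<^sup>2" by simp
  then have "sqrt (1 + 8 * (theta_std (N-1))\<^sup>2) \<ge> 3"
    by (metis real_sqrt_abs real_sqrt_le_mono abs_of_nonneg zero_le_numeral)
  then show ?thesis unfolding theta_def by simp
qed

lemma T_rec: assumes "N \<ge> 1" shows "(theta N N)\<^sup>2 - theta N N = 2 * (theta_std (N-1))\<^sup>2"
  using sq_rec[of 8 "theta_std (N-1)" "theta N N"] unfolding theta_def by simp

lemma z_step: assumes "i < N" shows
  "zeta N R i = 2 * theta_std i / (2 * theta_std i - 1) * zeta N R (Suc i)"
proof -
  define k where "k = N - 1 - i"
  have k: "N + 2 - i = Suc (Suc (Suc k))" "N - Suc k = i"
    using assms unfolding k_def by auto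
  have "N + 2 - Suc i = Suc (Suc k)" using k by simp
  then show ?thesis unfolding zeta_def using k assms by (simp add: theta_def)
qed

lemma z_N: "zeta N R N = theta N N / (theta N N - 1) * zeta N R (N+1)"
  unfolding zeta_def by (simp add: numeral_2_eq_2)

lemma z_N1: "zeta N R (N+1) = (theta N N - 1) / ((theta N N)\<^sup>2 * (2 * theta N N - 1)) * R\<^sup>2"
  unfolding zeta_def by (simp add: numeral_2_eq_2)

lemma z_N2: "zeta N R (N+2) = 0"
  unfolding zeta_def by simp

lemma z_pos: assumes "R > 0" "N \<ge> 1" "i \<le> N + 1" shows "zeta N R i > 0"
proof -
  have T: "theta N N \<ge> 2" using T_ge2 assms by simp
  have "\<forall>i. i \<le> N+1 \<longrightarrow> N + 1 - i = k \<longrightarrow> zeta N R i > 0" for k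
  proof (induction k)
    case 0
    show ?case
    proof (intro allI impI)
      fix i assume "i \<le> N+1" "N+1-i = 0"
      then have "i = N+1" by simp
      moreover have "(theta N N - 1) / ((theta N N)\<^sup>2 * (2 * theta N N - 1)) * R\<^sup>2 > 0"
        using T assms by (intro mult_pos_pos divide_pos_pos) auto
      ultimately show "zeta N R i > 0" using z_N1 by simp
    qed
  next
    case (Suc k)
    show ?case
    proof (intro allI impI)
      fix i assume i: "i \<le> N+1" "N+1-i = Suc k"
      then have p: "zeta N R (Suc i) > 0" using Suc.IH by auto
      show "zeta N R i > 0"
      proof (cases "i = N")
        case True
        then show ?thesis using z_N[of N R] p T by simp
      next
        case False
        then have "i < N" using i by simp
        moreover have "theta_std i \<ge> 1" by (rule ts_ge1)
        ultimately show ?thesis using z_step[of i N R] p by simp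
      qed
    qed
  qed
  then show ?thesis using assms by blast
qed

lemma x_sq_lt: assumes "R > 0" "N \<ge> 1" "j < N"
  shows "(xN1 N R j)\<^sup>2 = 2 * theta_std j * zeta N R j"
proof -
  define a where "a = zeta N R (Suc j)"
  define t where "t = theta_std j"
  have a: "a > 0" using z_pos assms unfolding a_def by simp
  have t: "t \<ge> 1" unfolding t_def by (rule ts_ge1)
  have zj: "zeta N R j = 2*t/(2*t-1) * a" using z_step assms unfolding a_def t_def by simp
  have d: "zeta N R j - zeta N R (Suc j) = a / (2*t-1)"
    using zj t unfolding a_def[symmetric] by (simp add: field_simps)
  have dp: "a / (2*t-1) > 0" using a t by simp
  have "(xN1 N R j)\<^sup>2 = (zeta N R j)\<^sup>2 / (a / (2*t-1))"
    unfolding xN1_def z_N2 using d dp by (simp add: power_divide)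
  also have "\<dots> = (2*t/(2*t-1) * a)\<^sup>2 / (a / (2*t-1))" using zj by simp
  also have "\<dots> = 2 * t * (2*t/(2*t-1) * a)" using t a h1[of a "2*t-1" "2*t"] by simp
  also have "\<dots> = 2 * t * zeta N R j" using zj by simp
  finally show ?thesis unfolding t_def .
qed

lemma x_sq_N: assumes "R > 0" "N \<ge> 1"
  shows "(xN1 N R N)\<^sup>2 = theta N N * zeta N R N"
proof -
  define a where "a = zeta N R (Suc N)"
  define t where "t = theta N N"
  have a: "a > 0" using z_pos assms unfolding a_def by simp
  have t: "t \<ge> 2" unfolding t_def using T_ge2 assms by simp
  have zj: "zeta N R N = t/(t-1) * a" using z_N unfolding a_def t_def by simp
  have d: "zeta N R N - zeta N R (Suc N) = a / (t-1)"
    using zj t unfolding a_def[symmetric] by (simp add: field_simps)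
  have dp: "a / (t-1) > 0" using a t by simp
  have "(xN1 N R N)\<^sup>2 = (zeta N R N)\<^sup>2 / (a / (t-1))"
    unfolding xN1_def z_N2 using d dp by (simp add: power_divide)
  also have "\<dots> = (t/(t-1) * a)\<^sup>2 / (a / (t-1))" using zj by simp
  also have "\<dots> = t * (t/(t-1) * a)" using t a h1[of a "t-1" t] by simp
  also have "\<dots> = t * zeta N R N" using zj by simp
  finally show ?thesis unfolding t_def .
qed

lemma partial: assumes "R > 0" "N \<ge> 1" "i \<le> N"
  shows "(\<Sum>j<i. (xN1 N R j)\<^sup>2) = 4 * (if i = 0 then 0 else (theta_std (i-1))\<^sup>2) * zeta N R i"
  using assms(3)
proof (induction i)
  case 0 then show ?case by simp
next
  case (Suc i)
  have IH: "(\<Sum>j<i. (xN1 N R j)\<^sup>2) = 4 * (if i = 0 then 0 else (theta_std (i-1))\<^sup>2) * zeta N R i"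
    using Suc by simp
  have il: "i < N" using Suc by simp
  define t where "t = theta_std i"
  have t: "t \<ge> 1" unfolding t_def by (rule ts_ge1)
  have zi: "zeta N R i = 2*t/(2*t-1) * zeta N R (Suc i)" using z_step il unfolding t_def by simp
  have rec: "(if i = 0 then 0 else (theta_std (i-1))\<^sup>2) = t\<^sup>2 - t"
  proof (cases i)
    case 0 then show ?thesis unfolding t_def by simp
  next
    case (Suc m) then show ?thesis unfolding t_def using ts_rec[of m] by simp
  qed
  have "(\<Sum>j<Suc i. (xN1 N R j)\<^sup>2) = 4 * (t\<^sup>2 - t) * zeta N R i + 2 * t * zeta N R i"
    using IH rec x_sq_lt[OF assms(1,2) il] unfolding t_def by simp
  also have "\<dots> = (2*t) * (2*t-1) * zeta N R i"
    by (simp add: algebra_simps power2_eq_square)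
  also have "\<dots> = (2*t) * (2*t-1) * (2*t/(2*t-1) * zeta N R (Suc i))"
    by (simp only: zi)
  also have "\<dots> = 4 * t\<^sup>2 * zeta N R (Suc i)"
    using t h2[of "2*t-1" "2*t" "2*t" "zeta N R (Suc i)"] by (simp add: power2_eq_square)
  finally show ?case unfolding t_def by simp
qed

theorem lemma3:
  fixes R L :: real and N :: nat
  assumes "R > 0" and "L > 0" and "N \<ge> 1"
  shows "sqrt (\<Sum>j\<le>N. (xN1 N R j)\<^sup>2) = R
         \<and> L / 2 * (zeta N R N + zeta N R (N + 1)) = L * R\<^sup>2 / (2 * (theta N N)\<^sup>2)"
proof -
  define T where "T = theta N N"
  have T: "T \<ge> 2" unfolding T_def using T_ge2 assms by simp
  have Tr: "(theta_std (N-1))\<^sup>2 = (T\<^sup>2 - T)/2" using T_rec assms unfolding T_def by simp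
  have z1: "zeta N R (N+1) = (T - 1) / (T\<^sup>2 * (2 * T - 1)) * R\<^sup>2" using z_N1 unfolding T_def .
  have z0: "zeta N R N = R\<^sup>2 / (T * (2*T-1))"
    using z_N[of N R] z1 T h3[of T R] unfolding T_def[symmetric] by simp
  have "(\<Sum>j\<le>N. (xN1 N R j)\<^sup>2) = (\<Sum>j<N. (xN1 N R j)\<^sup>2) + (xN1 N R N)\<^sup>2"
    by (simp add: lessThan_Suc_atMost[symmetric])
  also have "\<dots> = 4 * ((T\<^sup>2 - T)/2) * zeta N R N + T * zeta N R N"
    using partial[OF assms(1,3), of N] x_sq_N[OF assms(1,3)] Tr assms(3) unfolding T_def by simp
  also have "\<dots> = (2*T\<^sup>2 - T) * zeta N R N" by (simp add: field_simps)
  also have "\<dots> = (2*T\<^sup>2 - T) * (R\<^sup>2 / (T * (2*T-1)))" by (simp only: z0)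
  also have "\<dots> = R\<^sup>2" using T by (simp add: field_simps power2_eq_square)
  finally have s: "sqrt (\<Sum>j\<le>N. (xN1 N R j)\<^sup>2) = R" using assms by simp
  have "zeta N R N + zeta N R (N + 1) = R\<^sup>2 / T\<^sup>2"
    unfolding z0 z1 using h4 T by simp
  then show ?thesis using s unfolding T_def by simp
qed

end
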